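(* Let $(u_n)_{n\ge0}$ be a linear recurrence sequence of order $k$ with period $M$, and let $U_1,\dots,U_M$ be the associated polynomials (defined below). If $u_{A+j\ell}=0$ for $j=0,1,\dots,k-1$, where $A\equiv a\pmod M$ with $1\le a\le M$, $A\ge0$, and $\ell>0$ is divisible by $M$, then $U_a(x,y_1,\dots,y_r)=0$ identically (in particular $u_n=0$ for all $n\ge0$ with $n\equiv a\pmod M$).
   Context: Write the sequence as $u_n=\sum_{i=1}^mg_i(n)\alpha_i^n$ with distinct nonzero characteristic roots $\alpha_i$ and polynomials $g_i$. The period $M$ is the smallest $M\ge1$ such that whenever $\alpha_1^{e_1}\cdots\alpha_m^{e_m}$ ($e_i\in\mathbb Z$) is a root of unity, it is an $M$-th root of unity. Fix a primitive $M$-th root of unity $\zeta_M$ and multiplicatively independent algebraic numbers $\gamma_1,\dots,\gamma_r$ with $\alpha_i=\zeta_M^{e_{i,0}}\gamma_1^{e_{i,1}}\cdots\gamma_r^{e_{i,r}}$ ($e_{i,j}\in\mathbb Z$). For $1\le a\le M$ put $U_a(x,y_1,\dots,y_r)=\sum_{i=1}^mg_i(x)\zeta_M^{e_{i,0}a}y_1^{e_{i,1}}\cdots y_r^{e_{i,r}}$ (a polynomial in $x$ and Laurent polynomial in the $y_j$, with terms having equal exponent vectors combined), so that $u_n=U_a(n,\gamma_1^n,\dots,\gamma_r^n)$ for every $n\equiv a\pmod M$. *)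

theory Defs
  imports Complex_Main "HOL-Computational_Algebra.Polynomial"
begin

definition satisfies_lr :: "(nat \<Rightarrow> complex) \<Rightarrow> nat \<Rightarrow> bool" where
  "satisfies_lr u k \<longleftrightarrow>
     (\<exists>c :: nat \<Rightarrow> complex. \<forall>n. u (n + k) = (\<Sum>j<k. c j * u (n + j)))"

definition lrs_order :: "(nat \<Rightarrow> complex) \<Rightarrow> nat \<Rightarrow> bool" where
  "lrs_order u k \<longleftrightarrow> satisfies_lr u k \<and> (\<forall>k'<k. \<not> satisfies_lr u k')"

definition root_of_unity :: "complex \<Rightarrow> bool" where
  "root_of_unity z \<longleftrightarrow> (\<exists>n::nat. n > 0 \<and> z ^ n = 1)"

definition primitive_root_of_unity :: "nat \<Rightarrow> complex \<Rightarrow> bool" where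
  "primitive_root_of_unity M z \<longleftrightarrow> z ^ M = 1 \<and> (\<forall>d. 0 < d \<and> d < M \<longrightarrow> z ^ d \<noteq> 1)"

definition mon :: "nat \<Rightarrow> (nat \<Rightarrow> complex) \<Rightarrow> (nat \<Rightarrow> int) \<Rightarrow> complex" where
  "mon m \<alpha> e = (\<Prod>i<m. \<alpha> i powi e i)"

definition period_prop :: "nat \<Rightarrow> (nat \<Rightarrow> complex) \<Rightarrow> nat \<Rightarrow> bool" where
  "period_prop m \<alpha> M \<longleftrightarrow>
     (\<forall>e :: nat \<Rightarrow> int. root_of_unity (mon m \<alpha> e) \<longrightarrow> (mon m \<alpha> e) ^ M = 1)"

definition is_period :: "nat \<Rightarrow> (nat \<Rightarrow> complex) \<Rightarrow> nat \<Rightarrow> bool" where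
  "is_period m \<alpha> M \<longleftrightarrow> M \<ge> 1 \<and> period_prop m \<alpha> M \<and>
     (\<forall>M'. M' \<ge> 1 \<and> period_prop m \<alpha> M' \<longrightarrow> M \<le> M')"

definition mult_independent :: "nat \<Rightarrow> (nat \<Rightarrow> complex) \<Rightarrow> bool" where
  "mult_independent r \<gamma> \<longleftrightarrow> (\<forall>j<r. \<gamma> j \<noteq> 0) \<and>
     (\<forall>e :: nat \<Rightarrow> int. (\<Prod>j<r. \<gamma> j powi e j) = 1 \<longrightarrow> (\<forall>j<r. e j = 0))"

text \<open>Coefficient (a polynomial in x) of the monomial \<open>y_1^{v_1}\<cdots>y_r^{v_r}\<close> in \<open>U_a\<close>,
  after combining the terms with equal exponent vectors.\<close>
definition U_coeff ::
  "nat \<Rightarrow> nat \<Rightarrow> (nat \<Rightarrow> complex poly) \<Rightarrow> complex \<Rightarrow> (nat \<Rightarrow> int) \<Rightarrow> (nat \<Rightarrow> nat \<Rightarrow> int)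
     \<Rightarrow> nat \<Rightarrow> (nat \<Rightarrow> int) \<Rightarrow> complex poly" where
  "U_coeff m r g \<zeta> e0 e a v =
     (\<Sum>i\<in>{i. i < m \<and> (\<forall>j<r. e i j = v j)}. smult (\<zeta> powi (e0 i * int a)) (g i))"

definition U_zero ::
  "nat \<Rightarrow> nat \<Rightarrow> (nat \<Rightarrow> complex poly) \<Rightarrow> complex \<Rightarrow> (nat \<Rightarrow> int) \<Rightarrow> (nat \<Rightarrow> nat \<Rightarrow> int)
     \<Rightarrow> nat \<Rightarrow> bool" where
  "U_zero m r g \<zeta> e0 e a \<longleftrightarrow> (\<forall>v. U_coeff m r g \<zeta> e0 e a v = 0)"

end

theory Submission
  imports Defs "HOL-Computational_Algebra.Fundamental_Theorem_Algebra"
begin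


definition Lop :: "complex poly \<Rightarrow> (nat \<Rightarrow> complex) \<Rightarrow> nat \<Rightarrow> complex" where
  "Lop q w n = (\<Sum>i<Suc (degree q). coeff q i * w (n+i))"

lemma Lop_bound: "degree q < N \<Longrightarrow> Lop q w n = (\<Sum>i<N. coeff q i * w (n+i))"
  unfolding Lop_def
  by (rule sum.mono_neutral_left) (auto simp: coeff_eq_0)

lemma Lop_0[simp]: "Lop 0 w n = 0" by (simp add: Lop_def)

lemma Lop_add: "Lop (p+q) w n = Lop p w n + Lop q w n"
proof -
  define N where "N = Suc (max (degree p) (degree q))"
  have "degree (p+q) < N" using degree_add_le_max[of p q] unfolding N_def by simp
  then show ?thesis
    by (simp add: Lop_bound[of _ N] N_def sum.distrib algebra_simps)
qed

lemma Lop_smult: "Lop (smult a p) w n = a * Lop p w n"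
proof -
  have "degree (smult a p) < Suc (degree p)" using degree_smult_le[of a p] by linarith
  then show ?thesis by (simp add: Lop_bound[of _ "Suc (degree p)"] sum_distrib_left mult.assoc del: sum.lessThan_Suc)
qed

lemma Lop_minus: "Lop (p-q) w n = Lop p w n - Lop q w n"
  using Lop_add[of p "smult (-1) q" w n] Lop_smult[of "-1" q w n] by simp

lemma Lop_pCons: "Lop (pCons a p) w n = a * w n + Lop p w (Suc n)"
proof -
  have "degree (pCons a p) < Suc (Suc (degree p))" by (simp add: degree_pCons_le le_imp_less_Suc)
  then have "Lop (pCons a p) w n = (\<Sum>i<Suc (Suc (degree p)). coeff (pCons a p) i * w (n+i))"
    by (rule Lop_bound)
  also have "\<dots> = a * w n + (\<Sum>i<Suc (degree p). coeff p i * w (Suc n+i))"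
    by (subst sum.lessThan_Suc_shift) simp
  finally show ?thesis by (simp add: Lop_def)
qed

lemma Lop_const[simp]: "Lop [:a:] w n = a * w n"
  using Lop_pCons[of a 0 w n] by simp

lemma Lop_mult: "Lop (p * q) w n = Lop p (Lop q w) n"
proof (induction p arbitrary: n)
  case 0 then show ?case by simp
next
  case (pCons a p)
  show ?case
    by (simp add: Lop_add Lop_smult Lop_pCons pCons)
qed

lemma Lop_zero_fun: "Lop p (\<lambda>_. 0) n = 0" by (simp add: Lop_def)

lemma Lop_monom: "Lop (monom 1 l) w n = w (n+l)"
proof (induction l arbitrary: n)
  case 0 then show ?case by (simp add: monom_0)
next
  case (Suc l) then show ?case by (simp add: monom_Suc Lop_pCons)
qed

lemma Lop_comp: "Lop (pcompose p (monom 1 l)) w (n + m*l) = Lop p (\<lambda>j. w (n + j*l)) m"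
proof (induction p arbitrary: m)
  case 0 then show ?case by simp
next
  case (pCons a p)
  have "Lop (pcompose p (monom 1 l)) w (n + m*l + l) = Lop p (\<lambda>j. w (n + j*l)) (Suc m)"
    using pCons(2)[of "Suc m"] by (simp add: algebra_simps)
  then show ?case
    by (simp add: pcompose_pCons Lop_add Lop_mult Lop_monom Lop_pCons algebra_simps)
qed

lemma lin_dvd_comp: "[:-(z::complex),1:] dvd pcompose [:-(z^l),1:] (monom 1 l)"
  using dvd_iff_poly_eq_0[of "-z" "pcompose [:-(z^l),1:] (monom 1 l)"] by (simp add: poly_pcompose poly_monom)

lemma monic_comp_exists:
  "\<forall>\<chi>::complex poly. degree \<chi> = d \<longrightarrow> lead_coeff \<chi> = 1 \<longrightarrow>
     (\<exists>p. degree p = d \<and> lead_coeff p = 1 \<and> \<chi> dvd pcompose p (monom 1 l))"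
proof (induction d)
  case 0
  show ?case
  proof (intro allI impI)
    fix \<chi> :: "complex poly" assume "degree \<chi> = 0" "lead_coeff \<chi> = 1"
    then have "\<chi> = 1" by (metis degree_0_id one_pCons)
    then show "\<exists>p. degree p = 0 \<and> lead_coeff p = 1 \<and> \<chi> dvd pcompose p (monom 1 l)"
      by (intro exI[of _ 1]) simp
  qed
next
  case (Suc d)
  show ?case
  proof (intro allI impI)
    fix \<chi> :: "complex poly" assume d: "degree \<chi> = Suc d" and lc: "lead_coeff \<chi> = 1"
    have "\<not> constant (poly \<chi>)" using d constant_degree[of \<chi>] by simp
    then obtain z where "poly \<chi> z = 0" using fundamental_theorem_of_algebra by blast
    then have "[:-z,1:] dvd \<chi>" by (simp add: dvd_iff_poly_eq_0)
    then obtain q where q: "\<chi> = [:-z,1:] * q" by (elim dvdE)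
    have q0: "q \<noteq> 0" using q d by auto
    have "degree \<chi> = 1 + degree q" unfolding q by (subst degree_mult_eq) (use q0 in auto)
    then have dq: "degree q = d" using d by simp
    have "lead_coeff \<chi> = lead_coeff q" unfolding q by (subst lead_coeff_mult) simp
    then have lq: "lead_coeff q = 1" using lc by simp
    obtain p where p: "degree p = d" "lead_coeff p = 1" "q dvd pcompose p (monom 1 l)"
      using Suc.IH dq lq by blast
    have p0: "p \<noteq> 0" using p by auto
    show "\<exists>p. degree p = Suc d \<and> lead_coeff p = 1 \<and> \<chi> dvd pcompose p (monom 1 l)"
    proof (intro exI[of _ "[:-(z^l),1:] * p"] conjI)
      show "degree ([:-(z^l),1:] * p) = Suc d" using p p0 by (subst degree_mult_eq) auto
      show "lead_coeff ([:-(z^l),1:] * p) = 1" using p by (subst lead_coeff_mult) simp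
      show "\<chi> dvd pcompose ([:-(z^l),1:] * p) (monom 1 l)"
        unfolding q pcompose_mult by (rule mult_dvd_mono[OF lin_dvd_comp p(3)])
    qed
  qed
qed



lemma poly_nat_zero:
  fixes p :: "complex poly"
  assumes "\<And>j::nat. poly p (of_nat j) = 0"
  shows "p = 0"
proof (rule ccontr)
  assume "p \<noteq> 0"
  then have "finite {x. poly p x = 0}" by (rule poly_roots_finite)
  moreover have "range (of_nat :: nat \<Rightarrow> complex) \<subseteq> {x. poly p x = 0}" using assms by auto
  moreover have "infinite (range (of_nat :: nat \<Rightarrow> complex))"
    using range_inj_infinite[OF inj_of_nat] by simp
  ultimately show False using finite_subset by blast
qed

lemma shift_diff_degree:
  fixes p :: "complex poly"
  assumes "p \<noteq> 0"
  shows "pcompose p [:1,1:] - p = 0 \<or> degree (pcompose p [:1,1:] - p) < degree p"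
proof (cases "degree p = 0")
  case True
  then obtain c where "p = [:c:]" by (metis degree_0_id)
  then show ?thesis by simp
next
  case False
  have d: "degree (pcompose p [:1,1:]) = degree p" by (simp add: degree_pcompose)
  have l: "lead_coeff (pcompose p [:1,1:]) = lead_coeff p" by (simp add: lead_coeff_comp)
  have le: "degree (pcompose p [:1,1:] - p) \<le> degree p" using degree_diff_le[of "pcompose p [:1,1:]" "degree p" p] d by simp
  have c: "coeff (pcompose p [:1,1:] - p) (degree p) = 0" using l d by simp
  have "degree (pcompose p [:1,1:] - p) \<noteq> degree p \<or> pcompose p [:1,1:] - p = 0"
    using c by (metis leading_coeff_0_iff)
  then show ?thesis using le by auto
qed

lemma exp_poly_unique:
  fixes P :: "'a \<Rightarrow> complex poly" and \<beta> :: "'a \<Rightarrow> complex"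
  assumes fin: "finite S" and inj: "inj_on \<beta> S" and nz: "\<forall>s\<in>S. \<beta> s \<noteq> 0"
    and hz0: "\<forall>j::nat. (\<Sum>s\<in>S. poly (P s) (of_nat j) * \<beta> s ^ j) = 0"
  shows "\<forall>s\<in>S. P s = 0"
proof -
  define \<mu> where "\<mu> P = (\<Sum>s\<in>S. if P s = 0 then 0 else Suc (degree (P s)))" for P :: "'a \<Rightarrow> complex poly"
  have main: "\<forall>P. \<mu> P = N \<longrightarrow> (\<forall>j::nat. (\<Sum>s\<in>S. poly (P s) (of_nat j) * \<beta> s ^ j) = 0) \<longrightarrow> (\<forall>s\<in>S. P s = 0)" for N
  proof (induction N rule: less_induct)
    case (less N)
    show ?case
    proof (intro allI impI)
      fix P assume hN: "\<mu> P = N" and hz: "\<forall>j::nat. (\<Sum>s\<in>S. poly (P s) (of_nat j) * \<beta> s ^ j) = 0"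
      show "\<forall>s\<in>S. P s = 0"
      proof (rule ccontr)
        assume "\<not> (\<forall>s\<in>S. P s = 0)"
        then obtain t where t: "t \<in> S" "P t \<noteq> 0" by auto
        define Q where "Q s = smult (\<beta> s) (pcompose (P s) [:1,1:]) - smult (\<beta> t) (P s)" for s
        have hQ: "\<forall>j::nat. (\<Sum>s\<in>S. poly (Q s) (of_nat j) * \<beta> s ^ j) = 0"
        proof
          fix j :: nat
          have "(\<Sum>s\<in>S. poly (Q s) (of_nat j) * \<beta> s ^ j) =
             (\<Sum>s\<in>S. poly (P s) (of_nat (Suc j)) * \<beta> s ^ Suc j) - \<beta> t * (\<Sum>s\<in>S. poly (P s) (of_nat j) * \<beta> s ^ j)"
            by (simp add: Q_def poly_pcompose sum_subtractf sum_distrib_left algebra_simps)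
          moreover have "(\<Sum>s\<in>S. poly (P s) (of_nat (Suc j)) * \<beta> s ^ Suc j) = 0" using hz by blast
          moreover have "(\<Sum>s\<in>S. poly (P s) (of_nat j) * \<beta> s ^ j) = 0" using hz by blast
          ultimately show "(\<Sum>s\<in>S. poly (Q s) (of_nat j) * \<beta> s ^ j) = 0" by simp
        qed
        have le: "(if Q s = 0 then 0 else Suc (degree (Q s))) \<le> (if P s = 0 then 0 else Suc (degree (P s)))" for s
        proof (cases "P s = 0")
          case True then show ?thesis by (simp add: Q_def)
        next
          case False
          have "degree (Q s) \<le> degree (P s)"
            unfolding Q_def
            by (rule degree_diff_le) (auto intro: order_trans[OF degree_smult_le] simp: degree_pcompose)
          then show ?thesis using False by auto
        qed
        have Qt: "Q t = smult (\<beta> t) (pcompose (P t) [:1,1:] - P t)"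
          by (simp add: Q_def smult_diff_right)
        have lt: "(if Q t = 0 then 0 else Suc (degree (Q t))) < (if P t = 0 then 0 else Suc (degree (P t)))"
          using shift_diff_degree[OF t(2)] t nz unfolding Qt by auto
        have "\<mu> Q < \<mu> P" unfolding \<mu>_def
          by (rule sum_strict_mono_ex1[OF fin]) (use le lt t in auto)
        then have Q0: "\<forall>s\<in>S. Q s = 0" using less hQ hN by blast
        have others: "P s = 0" if s: "s \<in> S" "s \<noteq> t" for s
        proof (rule ccontr)
          assume Ps: "P s \<noteq> 0"
          have "coeff (Q s) (degree (P s)) = (\<beta> s - \<beta> t) * lead_coeff (P s)"
            by (simp add: Q_def degree_pcompose lead_coeff_comp[of "[:1,1:]", simplified, symmetric] algebra_simps)
          moreover have "\<beta> s \<noteq> \<beta> t" using inj s t(1) by (auto dest: inj_onD)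
          ultimately have "coeff (Q s) (degree (P s)) \<noteq> 0" using Ps by simp
          then show False using Q0 s by simp
        qed
        have "poly (P t) (of_nat j) = 0" for j :: nat
        proof -
          have "(\<Sum>s\<in>S. poly (P s) (of_nat j) * \<beta> s ^ j) = poly (P t) (of_nat j) * \<beta> t ^ j"
            by (rule sum.remove[OF fin t(1), THEN trans]) (simp add: others sum.neutral)
          then show ?thesis using hz nz t by simp
        qed
        then have "P t = 0" by (rule poly_nat_zero)
        then show False using t by simp
      qed
    qed
  qed
  show ?thesis using main hz0 by blast
qed



theorem corollary4:
  fixes u :: "nat \<Rightarrow> complex" and k m r M :: nat
    and \<alpha> :: "nat \<Rightarrow> complex" and g :: "nat \<Rightarrow> complex poly"
    and \<zeta> :: complex and \<gamma> :: "nat \<Rightarrow> complex"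
    and e0 :: "nat \<Rightarrow> int" and e :: "nat \<Rightarrow> nat \<Rightarrow> int"
    and a A l :: nat
  assumes order: "lrs_order u k"
    and repr: "\<And>n. u n = (\<Sum>i<m. poly (g i) (of_nat n) * \<alpha> i ^ n)"
    and distinct: "\<And>i i'. i < m \<Longrightarrow> i' < m \<Longrightarrow> \<alpha> i = \<alpha> i' \<Longrightarrow> i = i'"
    and nonzero_roots: "\<And>i. i < m \<Longrightarrow> \<alpha> i \<noteq> 0"
    and nonzero_g: "\<And>i. i < m \<Longrightarrow> g i \<noteq> 0"
    and period: "is_period m \<alpha> M"
    and zeta: "primitive_root_of_unity M \<zeta>"
    and gamma_alg: "\<And>j. j < r \<Longrightarrow> algebraic (\<gamma> j)"
    and gamma_indep: "mult_independent r \<gamma>"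
    and alpha_decomp: "\<And>i. i < m \<Longrightarrow> \<alpha> i = \<zeta> powi e0 i * (\<Prod>j<r. \<gamma> j powi e i j)"
    and a_range: "1 \<le> a" "a \<le> M"
    and A_cong: "A mod M = a mod M"
    and l_pos: "l > 0" and l_dvd: "M dvd l"
    and zeros: "\<And>j. j < k \<Longrightarrow> u (A + j * l) = 0"
  shows "U_zero m r g \<zeta> e0 e a \<and> (\<forall>n. n mod M = a mod M \<longrightarrow> u n = 0)"
proof -
  obtain c where rec: "\<And>n. u (n + k) = (\<Sum>j<k. c j * u (n + j))"
    using order unfolding lrs_order_def satisfies_lr_def by blast
  define \<chi> where "\<chi> = monom 1 k - (\<Sum>j<k. monom (c j) j)"
  have coeff\<chi>: "coeff \<chi> i = (if i = k then 1 else 0) - (if i < k then c i else 0)" for i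
    by (simp add: \<chi>_def coeff_diff coeff_sum coeff_monom)
  have "degree \<chi> \<le> k" by (rule degree_le) (simp add: coeff\<chi>)
  moreover have "k \<le> degree \<chi>" by (rule le_degree) (simp add: coeff\<chi>)
  ultimately have deg\<chi>: "degree \<chi> = k" by simp
  have lc\<chi>: "lead_coeff \<chi> = 1" by (simp add: deg\<chi> coeff\<chi>)
  have L\<chi>: "Lop \<chi> u = (\<lambda>_. 0)"
  proof
    fix n
    have "Lop \<chi> u n = (\<Sum>i<Suc k. coeff \<chi> i * u (n+i))" by (simp add: Lop_def deg\<chi>)
    also have "\<dots> = u (n + k) - (\<Sum>j<k. c j * u (n + j))"
      by (simp add: coeff\<chi> sum_negf)
    finally show "Lop \<chi> u n = 0" using rec by simp
  qed
  obtain p where p: "degree p = k" "lead_coeff p = 1" "\<chi> dvd pcompose p (monom 1 l)"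
    using monic_comp_exists deg\<chi> lc\<chi> by blast
  obtain h where h: "pcompose p (monom 1 l) = h * \<chi>" using p(3) by (metis dvdE mult.commute)
  define V where "V j = u (A + j*l)" for j
  have LV: "Lop p V j = 0" for j
  proof -
    have "Lop p V j = Lop (pcompose p (monom 1 l)) u (A + j*l)"
      unfolding V_def by (rule Lop_comp[symmetric])
    also have "\<dots> = 0" unfolding h Lop_mult L\<chi> Lop_zero_fun ..
    finally show ?thesis .
  qed
  have V0: "V j = 0" for j
  proof (induction j rule: less_induct)
    case (less j)
    show ?case
    proof (cases "j < k")
      case True then show ?thesis using zeros by (simp add: V_def)
    next
      case False
      then obtain t where t: "j = t + k" by (metis add.commute le_Suc_ex not_less)
      have "0 = Lop p V t" using LV by simp
      also have "\<dots> = (\<Sum>i<Suc k. coeff p i * V (t+i))" by (simp add: Lop_def p(1))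
      also have "\<dots> = V j" using less t p by (simp add: sum.neutral)
      finally show ?thesis by simp
    qed
  qed

  have M1: "M \<ge> 1" using period unfolding is_period_def by simp
  have zM: "\<zeta> ^ M = 1" using zeta unfolding primitive_root_of_unity_def by simp
  have z0: "\<zeta> \<noteq> 0" using zM M1 by (metis power_0_left one_neq_zero not_one_le_zero le_zero_eq)
  have zcong: "\<zeta> powi (x * int n) = \<zeta> powi (x * int a)" if "n mod M = a mod M" for x n
  proof -
    have "int n mod int M = int a mod int M" using that by (metis of_nat_mod)
    then have "int M dvd int n - int a" by (simp add: mod_eq_dvd_iff)
    then obtain t where t: "int n - int a = int M * t" by (elim dvdE)
    have "x * int n = x * int a + int M * (x * t)" using t by (simp add: algebra_simps)
    then have "\<zeta> powi (x * int n) = \<zeta> powi (x * int a) * \<zeta> powi (int M * (x * t))"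
      using z0 by (simp add: power_int_add)
    also have "\<zeta> powi (int M * (x * t)) = 1"
      by (simp add: power_int_mult zM)
    finally show ?thesis by simp
  qed
  define E where "E i = (\<lambda>j. if j < r then e i j else 0)" for i
  define G where "G w = (\<Prod>j<r. \<gamma> j powi w j)" for w :: "nat \<Rightarrow> int"
  define U where "U w = U_coeff m r g \<zeta> e0 e a w" for w
  have g0: "\<gamma> j \<noteq> 0" if "j < r" for j using gamma_indep that unfolding mult_independent_def by blast
  have G0: "G w \<noteq> 0" for w unfolding G_def using g0 by (simp add: power_int_not_zero)
  have GE: "G (E i) = (\<Prod>j<r. \<gamma> j powi e i j)" for i unfolding G_def E_def by (rule prod.cong) auto
  have alpha_pow: "\<alpha> i ^ n = \<zeta> powi (e0 i * int a) * G (E i) ^ n" if "i < m" "n mod M = a mod M" for i n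
  proof -
    have "\<alpha> i ^ n = (\<zeta> powi e0 i) ^ n * G (E i) ^ n" using alpha_decomp[OF that(1)] GE by (simp add: power_mult_distrib)
    also have "(\<zeta> powi e0 i) ^ n = \<zeta> powi (e0 i * int n)" by (simp add: power_int_power')
    finally show ?thesis using zcong[OF that(2)] by simp
  qed
  define W where "W = E ` {..<m}"
  have finW: "finite W" unfolding W_def by simp
  have EE: "E i = E i0 \<longleftrightarrow> (\<forall>j<r. e i j = e i0 j)" for i i0
    unfolding E_def fun_eq_iff by auto
  have Ei: "j < r \<Longrightarrow> E i j = e i j" for i j by (simp add: E_def)
  have U_E: "U (E i0) = (\<Sum>i\<in>{i\<in>{..<m}. E i = E i0}. smult (\<zeta> powi (e0 i * int a)) (g i))" for i0
    unfolding U_def U_coeff_def by (rule sum.cong) (auto simp: EE Ei)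
  have group: "u n = (\<Sum>w\<in>W. poly (U w) (of_nat n) * G w ^ n)" if n: "n mod M = a mod M" for n
  proof -
    have "u n = (\<Sum>i<m. (\<zeta> powi (e0 i * int a) * poly (g i) (of_nat n)) * G (E i) ^ n)"
      unfolding repr by (rule sum.cong) (auto simp: alpha_pow[OF _ n])
    also have "\<dots> = (\<Sum>w\<in>W. \<Sum>i\<in>{i\<in>{..<m}. E i = w}. (\<zeta> powi (e0 i * int a) * poly (g i) (of_nat n)) * G (E i) ^ n)"
      unfolding W_def by (rule sum.image_gen) simp
    also have "\<dots> = (\<Sum>w\<in>W. poly (U w) (of_nat n) * G w ^ n)"
    proof (rule sum.cong[OF refl])
      fix w assume "w \<in> W"
      then obtain i0 where w: "w = E i0" unfolding W_def by blast
      show "(\<Sum>i\<in>{i\<in>{..<m}. E i = w}. (\<zeta> powi (e0 i * int a) * poly (g i) (of_nat n)) * G (E i) ^ n) = poly (U w) (of_nat n) * G w ^ n"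
        unfolding w U_E by (simp add: poly_sum sum_distrib_right)
    qed
    finally show ?thesis .
  qed
  define \<beta> where "\<beta> w = G w ^ l" for w
  define P where "P w = smult (G w ^ A) (pcompose (U w) [:of_nat A, of_nat l:])" for w
  have Gpow: "G w ^ l = (\<Prod>j<r. \<gamma> j powi (w j * int l))" for w
    unfolding G_def by (simp add: prod_power_distrib power_int_power')
  have injb: "inj_on \<beta> W"
  proof (rule inj_onI)
    fix w1 w2 assume w1: "w1 \<in> W" and w2: "w2 \<in> W" and eq: "\<beta> w1 = \<beta> w2"
    define d where "d j = (w1 j - w2 j) * int l" for j
    have "(\<Prod>j<r. \<gamma> j powi d j) = (\<Prod>j<r. \<gamma> j powi (w1 j * int l) / \<gamma> j powi (w2 j * int l))"
      unfolding d_def by (rule prod.cong) (auto simp: g0 power_int_diff algebra_simps)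
    also have "\<dots> = G w1 ^ l / G w2 ^ l" by (simp add: Gpow prod_dividef)
    also have "\<dots> = 1" using eq G0 unfolding \<beta>_def by simp
    finally have "\<forall>j<r. d j = 0" using gamma_indep unfolding mult_independent_def by blast
    then have "\<forall>j<r. w1 j = w2 j" using l_pos unfolding d_def by simp
    moreover have "\<forall>j. \<not> j < r \<longrightarrow> w1 j = 0 \<and> w2 j = 0" using w1 w2 unfolding W_def E_def by auto
    ultimately show "w1 = w2" by (metis ext)
  qed
  have bnz: "\<forall>w\<in>W. \<beta> w \<noteq> 0" unfolding \<beta>_def using G0 by simp
  have cong_j: "(A + j*l) mod M = a mod M" for j
    using l_dvd A_cong by (metis mod_mult_self2 dvdE mult.assoc mult.commute)
  have hz: "\<forall>j::nat. (\<Sum>w\<in>W. poly (P w) (of_nat j) * \<beta> w ^ j) = 0"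
  proof
    fix j :: nat
    have "(\<Sum>w\<in>W. poly (P w) (of_nat j) * \<beta> w ^ j) = (\<Sum>w\<in>W. poly (U w) (of_nat (A + j*l)) * G w ^ (A + j*l))"
    proof (rule sum.cong[OF refl])
      fix w
      have "G w ^ (A + j*l) = G w ^ A * (G w ^ l) ^ j" by (metis power_add power_mult mult.commute)
      then show "poly (P w) (of_nat j) * \<beta> w ^ j = poly (U w) (of_nat (A + j*l)) * G w ^ (A + j*l)"
        by (simp add: P_def \<beta>_def poly_pcompose algebra_simps)
    qed
    also have "\<dots> = u (A + j*l)" using group[OF cong_j] by simp
    also have "\<dots> = 0" using V0[of j] by (simp add: V_def)
    finally show "(\<Sum>w\<in>W. poly (P w) (of_nat j) * \<beta> w ^ j) = 0" .
  qed
  have P0: "\<forall>w\<in>W. P w = 0" by (rule exp_poly_unique[OF finW injb bnz hz])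
  have UW: "U w = 0" if "w \<in> W" for w
  proof -
    have "pcompose (U w) [:of_nat A, of_nat l:] = 0" using P0 that G0 unfolding P_def by simp
    then show ?thesis by (rule pcompose_eq_0) (use l_pos in simp)
  qed
  have part1: "U_zero m r g \<zeta> e0 e a"
    unfolding U_zero_def
  proof
    fix v
    show "U_coeff m r g \<zeta> e0 e a v = 0"
    proof (cases "{i. i < m \<and> (\<forall>j<r. e i j = v j)} = {}")
      case True then show ?thesis unfolding U_coeff_def by (simp only: sum.empty)
    next
      case False
      then obtain i0 where i0: "i0 < m" "\<forall>j<r. e i0 j = v j" by blast
      have "U_coeff m r g \<zeta> e0 e a v = U (E i0)"
        unfolding U_def U_coeff_def using i0 by (intro sum.cong) (auto simp: E_def)
      also have "\<dots> = 0" using UW i0 unfolding W_def by blast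
      finally show ?thesis .
    qed
  qed
  have part2: "\<forall>n. n mod M = a mod M \<longrightarrow> u n = 0"
    using group UW by simp
  show ?thesis using part1 part2 by blast
qed

end
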